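(* Let $\alpha\ge 2$ and $\lambda>0$. There exists $u_0>0$ such that for every $u\ge u_0$ the self-adjoint operator $H_u-\lambda u^{-1-\alpha/2}$ on $L^2(\mathbb{R},dv)$ has at most one negative eigenvalue (counted with multiplicity), where $$H_u:=-\partial_v^2+\frac{v^2}{2(u^2+v^2)^{1/2}}-\frac{1}{\sqrt2\,(u^2+v^2)^{1/4}}.$$
   Context: $H_u$ is defined as a self-adjoint operator on $L^2(\mathbb{R})$ via the closure of its quadratic form on $C_0^\infty(\mathbb{R})$ (the potential is bounded below). *)

theory Defs
  imports "HOL-Analysis.Analysis"
begin

definition smooth_cs :: "(real \<Rightarrow> real) \<Rightarrow> bool" where
  "smooth_cs \<phi> \<longleftrightarrow> (\<forall>k. \<forall>x. ((deriv ^^ k) \<phi>) differentiable (at x))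
                    \<and> (\<exists>R. \<forall>x. \<bar>x\<bar> > R \<longrightarrow> \<phi> x = 0)"

(* Square integrable (Borel) functions, i.e. representatives of L^2(R, dv). *)
definition L2 :: "(real \<Rightarrow> real) \<Rightarrow> bool" where
  "L2 f \<longleftrightarrow> f \<in> borel_measurable lborel \<and> integrable lborel (\<lambda>x. (f x)\<^sup>2)"

(* Quadratic (sesquilinear) form of -d^2/dv^2 + W on C_0^\<infinity>. *)
definition sch_form :: "(real \<Rightarrow> real) \<Rightarrow> (real \<Rightarrow> real) \<Rightarrow> (real \<Rightarrow> real) \<Rightarrow> real" where
  "sch_form W \<phi> \<psi> = (\<integral>x. deriv \<phi> x * deriv \<psi> x + W x * \<phi> x * \<psi> x \<partial>lborel)"

(* \<phi> is an approximating sequence of f for the closure of the form: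
   \<phi> n \<in> C_0^\<infinity>, \<phi> n \<rightarrow> f in L^2, and (\<phi> n) is Cauchy in the form norm. *)
definition form_approx :: "(real \<Rightarrow> real) \<Rightarrow> (real \<Rightarrow> real) \<Rightarrow> (nat \<Rightarrow> real \<Rightarrow> real) \<Rightarrow> bool" where
  "form_approx W f \<phi> \<longleftrightarrow> L2 f \<and> (\<forall>n. smooth_cs (\<phi> n))
     \<and> (\<lambda>n. \<integral>x. (\<phi> n x - f x)\<^sup>2 \<partial>lborel) \<longlonglongrightarrow> 0
     \<and> (\<forall>e>0. \<exists>N. \<forall>n\<ge>N. \<forall>m\<ge>N.
           \<bar>sch_form W (\<lambda>x. \<phi> n x - \<phi> m x) (\<lambda>x. \<phi> n x - \<phi> m x)\<bar> < e)"

definition form_dom :: "(real \<Rightarrow> real) \<Rightarrow> (real \<Rightarrow> real) \<Rightarrow> bool" where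
  "form_dom W f \<longleftrightarrow> (\<exists>\<phi>. form_approx W f \<phi>)"

(* E is an eigenvalue of the self-adjoint operator associated with the closed form,
   with eigenfunction f: f \<in> D(q), f \<noteq> 0 in L^2, and q(f,g) = E <f,g> for all g \<in> D(q),
   where the closed form is q(f,g) = lim q(\<phi> n, \<psi> n) along approximating sequences. *)
definition is_eigen :: "(real \<Rightarrow> real) \<Rightarrow> real \<Rightarrow> (real \<Rightarrow> real) \<Rightarrow> bool" where
  "is_eigen W E f \<longleftrightarrow> form_dom W f \<and> \<not> (AE x in lborel. f x = 0)
     \<and> (\<forall>g \<phi> \<psi>. form_approx W f \<phi> \<longrightarrow> form_approx W g \<psi> \<longrightarrow>
           (\<lambda>n. sch_form W (\<phi> n) (\<psi> n)) \<longlonglongrightarrow> E * (\<integral>x. f x * g x \<partial>lborel))"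

(* At most one negative eigenvalue counted with multiplicity: the span of all
   eigenfunctions with negative eigenvalues has dimension \<le> 1, i.e. any two such
   eigenfunctions are proportional in L^2. *)
definition at_most_one_neg_eig :: "(real \<Rightarrow> real) \<Rightarrow> bool" where
  "at_most_one_neg_eig W \<longleftrightarrow>
     (\<forall>E1 E2 f1 f2. is_eigen W E1 f1 \<and> E1 < 0 \<and> is_eigen W E2 f2 \<and> E2 < 0 \<longrightarrow>
        (\<exists>c. AE x in lborel. f2 x = c * f1 x))"

definition Vpot :: "real \<Rightarrow> real \<Rightarrow> real" where
  "Vpot u v = v\<^sup>2 / (2 * sqrt (u\<^sup>2 + v\<^sup>2)) - 1 / (sqrt 2 * (u\<^sup>2 + v\<^sup>2) powr (1/4))"

end

theory Submission
  imports Defs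
begin


lemma CS:
  fixes g :: "real \<Rightarrow> real"
  assumes x0: "0 \<le> x" and cg: "continuous_on {0..x} g"
  shows "(integral {0..x} g)^2 \<le> x * integral {0..x} (\<lambda>t. (g t)^2)"
proof (cases "x = 0")
  case True then show ?thesis by simp
next
  case False
  hence x: "x > 0" using x0 by simp
  define I where "I = integral {0..x} g"
  define J where "J = integral {0..x} (\<lambda>t. (g t)^2)"
  define m where "m = I / x"
  have hI: "(g has_integral I) {0..x}" unfolding I_def
    using integrable_continuous_interval[OF cg] by (simp add: integrable_integral)
  have hJ: "((\<lambda>t. (g t)^2) has_integral J) {0..x}" unfolding J_def
    by (intro integrable_integral integrable_continuous_interval continuous_intros cg)
  have h: "((\<lambda>t. (g t)^2 - (2*m) * g t + m^2) has_integral (J - (2*m)*I + x * m^2)) {0..x}"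
    using has_integral_add[OF has_integral_diff[OF hJ has_integral_mult_right[OF hI, of "2*m"]]
        has_integral_const_real[of "m^2" 0 x]] x by simp
  have eq: "(\<lambda>t. (g t)^2 - (2*m) * g t + m^2) = (\<lambda>t. (g t - m)^2)"
    by (auto simp: power2_eq_square algebra_simps)
  have "0 \<le> J - (2*m)*I + x * m^2"
    using has_integral_nonneg[OF h[unfolded eq]] by simp
  hence "0 \<le> J - I^2 / x" unfolding m_def using x by (simp add: power2_eq_square field_simps)
  hence "I^2 \<le> x * J" using x by (simp add: field_simps)
  thus ?thesis unfolding I_def J_def .
qed

lemma pt:
  fixes f df :: "real \<Rightarrow> real"
  assumes x0: "0 \<le> x" and xT: "x \<le> T" and f0: "f 0 = 0"
   and der: "\<And>t. t \<in> {0..T} \<Longrightarrow> (f has_real_derivative df t) (at t)"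
   and cdf: "continuous_on {0..T} df"
  shows "(f x)^2 \<le> x * integral {0..T} (\<lambda>t. (df t)^2)"
proof -
  have "(df has_integral (f x - f 0)) {0..x}"
  proof (rule fundamental_theorem_of_calculus[OF x0])
    fix t assume "t \<in> {0..x}"
    hence "(f has_real_derivative df t) (at t)" using der xT by auto
    thus "(f has_vector_derivative df t) (at t within {0..x})"
      unfolding has_real_derivative_iff_has_vector_derivative
      by (rule has_vector_derivative_at_within)
  qed
  hence fx: "f x = integral {0..x} df" using f0 by (simp add: integral_unique)
  have cdx: "continuous_on {0..x} df" using cdf by (rule continuous_on_subset) (use xT in auto)
  have "(f x)^2 \<le> x * integral {0..x} (\<lambda>t. (df t)^2)" unfolding fx
    by (rule CS[OF x0 cdx])
  also have "integral {0..x} (\<lambda>t. (df t)^2) \<le> integral {0..T} (\<lambda>t. (df t)^2)"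
  proof (rule integral_subset_le)
    show "{0..x} \<subseteq> {0..T}" using xT by auto
    show "(\<lambda>t. (df t)^2) integrable_on {0..x}"
      by (intro integrable_continuous_interval continuous_intros cdx)
    show "(\<lambda>t. (df t)^2) integrable_on {0..T}"
      by (intro integrable_continuous_interval continuous_intros cdf)
  qed auto
  hence "x * integral {0..x} (\<lambda>t. (df t)^2) \<le> x * integral {0..T} (\<lambda>t. (df t)^2)"
    using x0 by (rule mult_left_mono)
  finally show ?thesis .
qed

lemma H:
  fixes f df w :: "real \<Rightarrow> real"
  assumes R0: "0 \<le> R" and RT: "R \<le> T" and f0: "f 0 = 0"
   and der: "\<And>t. t \<in> {0..T} \<Longrightarrow> (f has_real_derivative df t) (at t)"
   and cdf: "continuous_on {0..T} df"
   and cw: "continuous_on {0..T} w"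
   and wa: "\<And>t. t \<in> {0..T} \<Longrightarrow> -a \<le> w t"
   and wpos: "\<And>t. t \<in> {0..T} \<Longrightarrow> R \<le> t \<Longrightarrow> 0 \<le> w t"
   and a0: "0 \<le> a" and aR: "a * R^2 \<le> 2"
  shows "0 \<le> integral {0..T} (\<lambda>t. (df t)^2 + w t * (f t)^2)"
proof -
  have cf: "continuous_on {0..T} f"
    by (rule continuous_at_imp_continuous_on) (use der DERIV_isCont in blast)
  define D where "D = integral {0..T} (\<lambda>t. (df t)^2)"
  have i1: "(\<lambda>t. (df t)^2) integrable_on {0..T}"
    by (intro integrable_continuous_interval continuous_intros cdf)
  have i2: "(\<lambda>t. w t * (f t)^2) integrable_on {0..T}"
    by (intro integrable_continuous_interval continuous_intros cf cw)
  have D0: "0 \<le> D" unfolding D_def by (rule integral_nonneg[OF i1]) auto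
  have split: "integral {0..T} (\<lambda>t. (df t)^2 + w t * (f t)^2)
      = D + integral {0..T} (\<lambda>t. w t * (f t)^2)"
    unfolding D_def by (rule integral_add[OF i1 i2])
  have comb: "integral {0..R} (\<lambda>t. w t * (f t)^2) + integral {R..T} (\<lambda>t. w t * (f t)^2)
      = integral {0..T} (\<lambda>t. w t * (f t)^2)"
    by (rule Henstock_Kurzweil_Integration.integral_combine[OF R0 RT i2])
  have iR: "(\<lambda>t. w t * (f t)^2) integrable_on {0..R}"
    using i2 by (rule integrable_subinterval_real) (use RT in auto)
  have iRT: "(\<lambda>t. w t * (f t)^2) integrable_on {R..T}"
    using i2 by (rule integrable_subinterval_real) (use R0 in auto)
  have p2: "0 \<le> integral {R..T} (\<lambda>t. w t * (f t)^2)"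
    by (rule integral_nonneg[OF iRT]) (use wpos R0 in auto)
  have hid: "((\<lambda>t. -a * D * t) has_integral (-a * D * (R^2 / 2))) {0..R}"
    using has_integral_mult_right[OF ident_has_integral[OF R0], of "-a*D"] by simp
  have p1: "-a * D * (R^2 / 2) \<le> integral {0..R} (\<lambda>t. w t * (f t)^2)"
  proof (rule has_integral_le[OF hid integrable_integral[OF iR]])
    fix t assume t: "t \<in> {0..R}"
    hence tT: "t \<in> {0..T}" using RT by auto
    have "(f t)^2 \<le> t * D" unfolding D_def
      by (rule pt[OF _ _ f0 der cdf]) (use t RT in auto)
    hence "a * (f t)^2 \<le> a * (t * D)" using a0 by (rule mult_left_mono)
    hence "-a * D * t \<le> -a * (f t)^2" by (simp add: algebra_simps)
    also have "... \<le> w t * (f t)^2" using wa[OF tT] by (intro mult_right_mono) auto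
    finally show "-a * D * t \<le> w t * (f t)^2" .
  qed
  have "a * R^2 * D \<le> 2 * D" using aR D0 by (rule mult_right_mono)
  thus ?thesis using split comb p1 p2 by (simp add: algebra_simps)
qed

lemma Wlem:
  fixes f df W :: "real \<Rightarrow> real"
  assumes der: "\<And>t. (f has_real_derivative df t) (at t)"
   and cdf: "continuous_on UNIV df"
   and cW: "continuous_on UNIV W"
   and supp: "\<And>t. B < \<bar>t\<bar> \<Longrightarrow> f t = 0"
   and dsupp: "\<And>t. B < \<bar>t\<bar> \<Longrightarrow> df t = 0"
   and f0: "f 0 = 0"
   and Wa: "\<And>t. -a \<le> W t"
   and Wpos: "\<And>t. R \<le> \<bar>t\<bar> \<Longrightarrow> 0 \<le> W t"
   and R0: "0 \<le> R" and a0: "0 \<le> a" and aR: "a * R^2 \<le> 2"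
  shows "0 \<le> (\<integral>t. (df t)^2 + W t * (f t)^2 \<partial>lborel)"
proof -
  define T where "T = max R B + 1"
  have RT: "R \<le> T" unfolding T_def by simp
  have T0: "0 \<le> T" using R0 RT by simp
  define P where "P = (\<lambda>t. (df t)^2 + W t * (f t)^2)"
  have cf: "continuous_on UNIV f"
    by (rule continuous_at_imp_continuous_on) (use der DERIV_isCont in blast)
  have cP: "continuous_on UNIV P" unfolding P_def
    by (intro continuous_intros cf cdf cW)
  have Pz: "P t = 0" if "t \<notin> {-T..T}" for t
  proof -
    have "B < \<bar>t\<bar>" using that unfolding T_def by auto
    thus ?thesis unfolding P_def using supp dsupp by simp
  qed
  have Peq: "P = (\<lambda>t. indicator {-T..T} t *\<^sub>R P t)"
    using Pz by (auto simp: fun_eq_iff indicator_def)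
  have intP: "integrable lborel P"
    by (subst Peq, rule borel_integrable_compact) (auto intro: continuous_on_subset[OF cP])
  have "(\<integral>t. P t \<partial>lborel) = integral UNIV P"
    using integral_lborel[OF intP] by simp
  also have "integral UNIV P = integral UNIV (\<lambda>t. if t \<in> {-T..T} then P t else 0)"
    by (rule arg_cong[where f="integral UNIV"]) (use Pz in auto)
  also have "... = integral {-T..T} P" by (rule integral_restrict_UNIV)
  also have "... = integral {-T..0} P + integral {0..T} P"
    by (rule Henstock_Kurzweil_Integration.integral_combine[symmetric])
       (use T0 in \<open>auto intro!: integrable_continuous_interval continuous_on_subset[OF cP]\<close>)
  also have "integral {-T..0} P = integral {0..T} (\<lambda>t. P (-t))"
    using Henstock_Kurzweil_Integration.integral_reflect_real[of T 0 "\<lambda>t. P (-t)"] by simp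
  finally have eq: "(\<integral>t. P t \<partial>lborel) = integral {0..T} (\<lambda>t. P (-t)) + integral {0..T} P" .
  have h1: "0 \<le> integral {0..T} P" unfolding P_def
  proof (rule H[OF R0 RT, where f=f, OF f0])
    show "continuous_on {0..T} df" using cdf by (rule continuous_on_subset) auto
    show "continuous_on {0..T} W" using cW by (rule continuous_on_subset) auto
  qed (use der Wa Wpos a0 aR in auto)
  have h2: "0 \<le> integral {0..T} (\<lambda>t. (- df (-t))^2 + W (-t) * (f (-t))^2)"
  proof (rule H[OF R0 RT, where f="\<lambda>t. f (-t)"])
    show "continuous_on {0..T} (\<lambda>t. - df (- t))"
      by (intro continuous_intros continuous_on_compose2[OF cdf]) auto
    show "continuous_on {0..T} (\<lambda>t. W (- t))"
      by (intro continuous_intros continuous_on_compose2[OF cW]) auto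
    fix t
    show "((\<lambda>t. f (- t)) has_real_derivative - df (- t)) (at t)"
      using der[of "-t"] DERIV_mirror by blast
  qed (use f0 Wa Wpos a0 aR in auto)
  have "(\<lambda>t. P (-t)) = (\<lambda>t. (- df (-t))^2 + W (-t) * (f (-t))^2)"
    unfolding P_def by simp
  thus ?thesis using eq h1 h2 unfolding P_def by simp
qed

lemma sc_facts:
  assumes "smooth_cs \<phi>"
  shows "\<And>x. (\<phi> has_real_derivative deriv \<phi> x) (at x)"
    and "continuous_on UNIV (deriv \<phi>)"
    and "\<exists>B. \<forall>x. B < \<bar>x\<bar> \<longrightarrow> \<phi> x = 0 \<and> deriv \<phi> x = 0"
proof -
  have d0: "\<And>x. \<phi> differentiable (at x)"
    using assms unfolding smooth_cs_def by (metis funpow_0)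
  have d1: "\<And>x. (deriv \<phi>) differentiable (at x)"
    using assms unfolding smooth_cs_def by (metis funpow_0 funpow_Suc_right comp_def One_nat_def funpow.simps(2) o_apply)
  show der: "\<And>x. (\<phi> has_real_derivative deriv \<phi> x) (at x)"
    using d0 DERIV_deriv_iff_real_differentiable by blast
  show "continuous_on UNIV (deriv \<phi>)"
    by (rule continuous_at_imp_continuous_on) (use d1 differentiable_imp_continuous_within in blast)
  obtain B where B: "\<And>x. B < \<bar>x\<bar> \<Longrightarrow> \<phi> x = 0"
    using assms unfolding smooth_cs_def by blast
  have "deriv \<phi> x = 0" if x: "B < \<bar>x\<bar>" for x
  proof -
    have "((\<lambda>_. 0::real) has_real_derivative deriv \<phi> x) (at x)"
    proof (rule has_field_derivative_transform_within_open[OF der, of "{y. B < \<bar>y\<bar>}"])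
      show "open {y::real. B < \<bar>y\<bar>}"
        by (rule open_Collect_less) (intro continuous_intros)+
    qed (use x B in auto)
    moreover have "((\<lambda>_. 0::real) has_real_derivative 0) (at x)" by simp
    ultimately show ?thesis by (rule DERIV_unique)
  qed
  thus "\<exists>B. \<forall>x. B < \<bar>x\<bar> \<longrightarrow> \<phi> x = 0 \<and> deriv \<phi> x = 0" using B by blast
qed

lemma int_cs:
  fixes g :: "real \<Rightarrow> real"
  assumes cg: "continuous_on UNIV g" and z: "\<And>x. B < \<bar>x\<bar> \<Longrightarrow> g x = 0"
  shows "integrable lborel g"
proof -
  have "g = (\<lambda>t. indicator {-B..B} t *\<^sub>R g t)"
  proof (rule ext)
    fix t show "g t = indicator {-B..B} t *\<^sub>R g t"
    proof (cases "B < \<bar>t\<bar>")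
      case True then show ?thesis using z by simp
    next
      case False then show ?thesis by (simp add: indicator_def abs_le_iff not_less)
    qed
  qed
  thus ?thesis
    by (metis borel_integrable_compact compact_Icc continuous_on_subset[OF cg] subset_UNIV)
qed

lemma Aform:
  fixes W :: "real \<Rightarrow> real"
  assumes cW: "continuous_on UNIV W"
   and Wa: "\<And>t. -a \<le> W t"
   and Wpos: "\<And>t. R \<le> \<bar>t\<bar> \<Longrightarrow> 0 \<le> W t"
   and R0: "0 \<le> R" and a0: "0 \<le> a" and aR: "a * R^2 \<le> 2"
   and sp: "smooth_cs \<phi>" and sq: "smooth_cs \<psi>"
   and c0: "c1 * \<phi> 0 + c2 * \<psi> 0 = 0"
  shows "0 \<le> c1^2 * sch_form W \<phi> \<phi> + 2 * c1 * c2 * sch_form W \<phi> \<psi> + c2^2 * sch_form W \<psi> \<psi>"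
proof -
  note p = sc_facts[OF sp] and q = sc_facts[OF sq]
  obtain B1 where B1: "\<And>x. B1 < \<bar>x\<bar> \<Longrightarrow> \<phi> x = 0 \<and> deriv \<phi> x = 0" using p(3) by blast
  obtain B2 where B2: "\<And>x. B2 < \<bar>x\<bar> \<Longrightarrow> \<psi> x = 0 \<and> deriv \<psi> x = 0" using q(3) by blast
  define B where "B = max B1 B2"
  have Bp: "\<phi> x = 0 \<and> deriv \<phi> x = 0" "\<psi> x = 0 \<and> deriv \<psi> x = 0" if "B < \<bar>x\<bar>" for x
    using B1 B2 that unfolding B_def by auto
  have cp: "continuous_on UNIV \<phi>"
    by (rule continuous_at_imp_continuous_on) (use p(1) DERIV_isCont in blast)
  have cq: "continuous_on UNIV \<psi>"
    by (rule continuous_at_imp_continuous_on) (use q(1) DERIV_isCont in blast)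
  have main: "0 \<le> (\<integral>t. (c1 * deriv \<phi> t + c2 * deriv \<psi> t)^2 + W t * (c1 * \<phi> t + c2 * \<psi> t)^2 \<partial>lborel)"
  proof (rule Wlem[where B=B and R=R and a=a])
    fix t
    show "((\<lambda>x. c1 * \<phi> x + c2 * \<psi> x) has_real_derivative c1 * deriv \<phi> t + c2 * deriv \<psi> t) (at t)"
      by (intro DERIV_add DERIV_cmult p(1) q(1))
  next
    show "continuous_on UNIV (\<lambda>t. c1 * deriv \<phi> t + c2 * deriv \<psi> t)"
      by (intro continuous_intros p(2) q(2))
  qed (use cW Bp c0 Wa Wpos R0 a0 aR in auto)
  define F where "F = (\<lambda>f g t. deriv f t * deriv g t + W t * f t * g t)"
  have iF: "integrable lborel (F f g)" if "f = \<phi> \<or> f = \<psi>" "g = \<phi> \<or> g = \<psi>" for f g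
  proof (rule int_cs[where B=B])
    show "continuous_on UNIV (F f g)" unfolding F_def using that
      by (auto intro!: continuous_intros p(2) q(2) cp cq cW)
    fix x assume "B < \<bar>x\<bar>" thus "F f g x = 0" unfolding F_def using that Bp by auto
  qed
  have eq: "(\<lambda>t. (c1 * deriv \<phi> t + c2 * deriv \<psi> t)^2 + W t * (c1 * \<phi> t + c2 * \<psi> t)^2)
     = (\<lambda>t. c1^2 * F \<phi> \<phi> t + (2 * c1 * c2 * F \<phi> \<psi> t + c2^2 * F \<psi> \<psi> t))"
    unfolding F_def by (auto simp: fun_eq_iff power2_eq_square algebra_simps)
  have "(\<integral>t. c1^2 * F \<phi> \<phi> t + (2 * c1 * c2 * F \<phi> \<psi> t + c2^2 * F \<psi> \<psi> t) \<partial>lborel)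
      = c1^2 * sch_form W \<phi> \<phi> + 2 * c1 * c2 * sch_form W \<phi> \<psi> + c2^2 * sch_form W \<psi> \<psi>"
  proof -
    have i11: "integrable lborel (F \<phi> \<phi>)" and i12: "integrable lborel (F \<phi> \<psi>)"
      and i22: "integrable lborel (F \<psi> \<psi>)" using iF by auto
    have s1: "(\<integral>t. c1^2 * F \<phi> \<phi> t + (2 * c1 * c2 * F \<phi> \<psi> t + c2^2 * F \<psi> \<psi> t) \<partial>lborel)
       = (\<integral>t. c1^2 * F \<phi> \<phi> t \<partial>lborel) + (\<integral>t. 2 * c1 * c2 * F \<phi> \<psi> t + c2^2 * F \<psi> \<psi> t \<partial>lborel)"
      by (rule Bochner_Integration.integral_add) (auto intro!: Bochner_Integration.integrable_add integrable_mult_right i11 i12 i22)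
    have s2: "(\<integral>t. 2 * c1 * c2 * F \<phi> \<psi> t + c2^2 * F \<psi> \<psi> t \<partial>lborel)
       = (\<integral>t. 2 * c1 * c2 * F \<phi> \<psi> t \<partial>lborel) + (\<integral>t. c2^2 * F \<psi> \<psi> t \<partial>lborel)"
      by (rule Bochner_Integration.integral_add) (auto intro!: Bochner_Integration.integrable_add integrable_mult_right i11 i12 i22)
    have e: "sch_form W f g = integral\<^sup>L lborel (F f g)" for f g
      unfolding sch_form_def F_def by simp
    show ?thesis using s1 s2 unfolding e by simp
  qed
  thus ?thesis using main eq by simp
qed

lemma negdef:
  fixes a b c x y :: real
  assumes "a < 0" "a * c - b^2 > 0" "x \<noteq> 0 \<or> y \<noteq> 0"
  shows "a * x^2 + 2 * b * x * y + c * y^2 < 0"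
proof -
  have id: "a * (a * x^2 + 2 * b * x * y + c * y^2) = (a * x + b * y)^2 + (a * c - b^2) * y^2"
    by (simp add: power2_eq_square algebra_simps)
  have "0 < a * (a * x^2 + 2 * b * x * y + c * y^2)"
  proof (cases "y = 0")
    case True
    then have "x \<noteq> 0" using assms by auto
    hence "0 < x^2" by simp
    hence "a * x^2 < 0" using assms(1) by (simp add: mult_neg_pos)
    then show ?thesis using True assms(1) by (simp add: zero_less_mult_iff)
  next
    case False
    have "0 < (a * c - b^2) * y^2" using False assms(2) by simp
    moreover have "0 \<le> (a * x + b * y)^2" by simp
    ultimately show ?thesis unfolding id by linarith
  qed
  thus ?thesis using assms(1) by (simp add: zero_less_mult_iff)
qed

lemma L2_prod:
  assumes "L2 f" "L2 g"
  shows "integrable lborel (\<lambda>x. f x * g x)"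
proof (rule Bochner_Integration.integrable_bound)
  show "integrable lborel (\<lambda>x. (f x)^2 + (g x)^2)"
    using assms unfolding L2_def by auto
  show "(\<lambda>x. f x * g x) \<in> borel_measurable lborel"
    using assms unfolding L2_def by auto
  show "AE x in lborel. norm (f x * g x) \<le> norm ((f x)^2 + (g x)^2)"
  proof (rule AE_I2)
    fix x
    have "0 \<le> (\<bar>f x\<bar> - \<bar>g x\<bar>)^2" by simp
    hence "2 * \<bar>f x\<bar> * \<bar>g x\<bar> \<le> (f x)^2 + (g x)^2"
      by (simp add: power2_eq_square algebra_simps)
    moreover have "0 \<le> \<bar>f x\<bar> * \<bar>g x\<bar>" by simp
    ultimately have "\<bar>f x\<bar> * \<bar>g x\<bar> \<le> (f x)^2 + (g x)^2" by linarith
    thus "norm (f x * g x) \<le> norm ((f x)^2 + (g x)^2)"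
      by (simp add: abs_mult)
  qed
qed

lemma Abs:
  fixes W :: "real \<Rightarrow> real"
  assumes cW: "continuous_on UNIV W"
   and Wa: "\<And>t. -a \<le> W t"
   and Wpos: "\<And>t. R \<le> \<bar>t\<bar> \<Longrightarrow> 0 \<le> W t"
   and R0: "0 \<le> R" and a0: "0 \<le> a" and aR: "a * R^2 \<le> 2"
  shows "at_most_one_neg_eig W"
  unfolding at_most_one_neg_eig_def
proof (intro allI impI)
  fix E1 E2 f1 f2
  assume "is_eigen W E1 f1 \<and> E1 < 0 \<and> is_eigen W E2 f2 \<and> E2 < 0"
  hence e1: "is_eigen W E1 f1" and E1: "E1 < 0" and e2: "is_eigen W E2 f2" and E2: "E2 < 0"
    by auto
  show "\<exists>c. AE x in lborel. f2 x = c * f1 x"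
  proof (rule ccontr)
    assume np: "\<not> (\<exists>c. AE x in lborel. f2 x = c * f1 x)"
    obtain \<phi> where ap: "form_approx W f1 \<phi>" using e1 unfolding is_eigen_def form_dom_def by blast
    obtain \<psi> where aq: "form_approx W f2 \<psi>" using e2 unfolding is_eigen_def form_dom_def by blast
    have nz1: "\<not> (AE x in lborel. f1 x = 0)" using e1 unfolding is_eigen_def by blast
    have lim1: "\<And>g hh. form_approx W g hh \<Longrightarrow> (\<lambda>n. sch_form W (\<phi> n) (hh n)) \<longlonglongrightarrow> E1 * (\<integral>x. f1 x * g x \<partial>lborel)"
      using e1 ap unfolding is_eigen_def by blast
    have lim2: "\<And>g hh. form_approx W g hh \<Longrightarrow> (\<lambda>n. sch_form W (\<psi> n) (hh n)) \<longlonglongrightarrow> E2 * (\<integral>x. f2 x * g x \<partial>lborel)"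
      using e2 aq unfolding is_eigen_def by blast
    have L1: "L2 f1" and L2': "L2 f2" using ap aq unfolding form_approx_def by auto
    have sp: "\<And>n. smooth_cs (\<phi> n)" and sq: "\<And>n. smooth_cs (\<psi> n)"
      using ap aq unfolding form_approx_def by auto
    define G11 where "G11 = (\<integral>x. f1 x * f1 x \<partial>lborel)"
    define G12 where "G12 = (\<integral>x. f1 x * f2 x \<partial>lborel)"
    define G22 where "G22 = (\<integral>x. f2 x * f2 x \<partial>lborel)"
    have i11: "integrable lborel (\<lambda>x. f1 x * f1 x)" by (rule L2_prod[OF L1 L1])
    have i12: "integrable lborel (\<lambda>x. f1 x * f2 x)" by (rule L2_prod[OF L1 L2'])
    have i22: "integrable lborel (\<lambda>x. f2 x * f2 x)" by (rule L2_prod[OF L2' L2'])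
    have symq: "\<And>f g. sch_form W f g = sch_form W g f"
      unfolding sch_form_def by (simp add: mult_ac)
    have A11: "(\<lambda>n. sch_form W (\<phi> n) (\<phi> n)) \<longlonglongrightarrow> E1 * G11" unfolding G11_def by (rule lim1[OF ap])
    have A12: "(\<lambda>n. sch_form W (\<phi> n) (\<psi> n)) \<longlonglongrightarrow> E1 * G12" unfolding G12_def by (rule lim1[OF aq])
    have A22: "(\<lambda>n. sch_form W (\<psi> n) (\<psi> n)) \<longlonglongrightarrow> E2 * G22" unfolding G22_def by (rule lim2[OF aq])
    have A21: "(\<lambda>n. sch_form W (\<phi> n) (\<psi> n)) \<longlonglongrightarrow> E2 * G12"
      using lim2[OF ap] unfolding G12_def by (simp add: symq mult.commute)
    have E12: "E1 * G12 = E2 * G12" using LIMSEQ_unique[OF A12 A21] .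
    have G11pos: "0 < G11"
    proof -
      have "0 \<le> G11" unfolding G11_def by (rule integral_nonneg_AE) auto
      moreover have "G11 \<noteq> 0"
      proof
        assume "G11 = 0"
        hence "AE x in lborel. f1 x * f1 x = 0"
          using integral_nonneg_eq_0_iff_AE[OF i11] unfolding G11_def by auto
        hence "AE x in lborel. f1 x = 0" by (rule eventually_mono) simp
        thus False using nz1 by blast
      qed
      ultimately show ?thesis by simp
    qed
    define g where "g = (\<lambda>x. G12 * f1 x - G11 * f2 x)"
    have ig: "integrable lborel (\<lambda>x. g x * g x)"
    proof -
      have "(\<lambda>x. g x * g x) = (\<lambda>x. G12^2 * (f1 x * f1 x) - 2 * G12 * G11 * (f1 x * f2 x) + G11^2 * (f2 x * f2 x))"
        unfolding g_def by (auto simp: fun_eq_iff power2_eq_square algebra_simps)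
      thus ?thesis by (simp add: i11 i12 i22)
    qed
    have gint: "(\<integral>x. g x * g x \<partial>lborel) = G11 * (G11 * G22 - G12^2)"
    proof -
      have "(\<lambda>x. g x * g x) = (\<lambda>x. G12^2 * (f1 x * f1 x) - 2 * G12 * G11 * (f1 x * f2 x) + G11^2 * (f2 x * f2 x))"
        unfolding g_def by (auto simp: fun_eq_iff power2_eq_square algebra_simps)
      hence "(\<integral>x. g x * g x \<partial>lborel) = G12^2 * G11 - 2 * G12 * G11 * G12 + G11^2 * G22"
        unfolding G11_def G12_def G22_def by (simp add: i11 i12 i22)
      thus ?thesis by (simp add: power2_eq_square algebra_simps)
    qed
    have detG: "0 < G11 * G22 - G12^2"
    proof -
      have "0 \<le> (\<integral>x. g x * g x \<partial>lborel)" by (rule integral_nonneg_AE) auto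
      moreover have "(\<integral>x. g x * g x \<partial>lborel) \<noteq> 0"
      proof
        assume "(\<integral>x. g x * g x \<partial>lborel) = 0"
        hence "AE x in lborel. g x * g x = 0"
          using integral_nonneg_eq_0_iff_AE[OF ig] by auto
        hence "AE x in lborel. g x = 0" by (rule eventually_mono) simp
        hence "AE x in lborel. f2 x = (G12 / G11) * f1 x"
        proof (rule eventually_mono)
          fix x assume "g x = 0"
          hence "G11 * f2 x = G12 * f1 x" unfolding g_def by simp
          thus "f2 x = (G12 / G11) * f1 x" using G11pos by (simp add: field_simps)
        qed
        thus False using np by blast
      qed
      ultimately have "0 < G11 * (G11 * G22 - G12^2)" using gint by linarith
      thus ?thesis using G11pos by (simp add: zero_less_mult_iff)
    qed
    have G22pos: "0 < G22"
    proof -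
      have "0 \<le> G12^2" by simp
      hence "0 < G11 * G22" using detG by linarith
      thus ?thesis using G11pos by (simp add: zero_less_mult_iff)
    qed
    define m11 m12 m22 where "m11 = E1 * G11" and "m12 = E1 * G12" and "m22 = E2 * G22"
    have m11: "m11 < 0" unfolding m11_def using E1 G11pos by (simp add: mult_neg_pos)
    have detM: "0 < m11 * m22 - m12^2"
    proof (cases "E1 = E2")
      case True
      have "m11 * m22 - m12^2 = E1^2 * (G11 * G22 - G12^2)"
        unfolding m11_def m12_def m22_def True by (simp add: power2_eq_square algebra_simps)
      thus ?thesis using detG E1 True by simp
    next
      case False
      hence "G12 = 0" using E12 by simp
      hence "m11 * m22 - m12^2 = (E1 * E2) * (G11 * G22)"
        unfolding m11_def m12_def m22_def by (simp add: algebra_simps)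
      moreover have "0 < E1 * E2" using E1 E2 by (simp add: mult_neg_neg)
      moreover have "0 < G11 * G22" using G11pos G22pos by simp
      ultimately show ?thesis by simp
    qed
    define a11 a12 a22 where "a11 = (\<lambda>n. sch_form W (\<phi> n) (\<phi> n))"
      and "a12 = (\<lambda>n. sch_form W (\<phi> n) (\<psi> n))" and "a22 = (\<lambda>n. sch_form W (\<psi> n) (\<psi> n))"
    have t11: "a11 \<longlonglongrightarrow> m11" using A11 unfolding a11_def m11_def .
    have td: "(\<lambda>n. a11 n * a22 n - (a12 n)^2) \<longlonglongrightarrow> m11 * m22 - m12^2"
      using A11 A12 A22 unfolding a11_def a12_def a22_def m11_def m12_def m22_def
      by (intro tendsto_intros)
    have "eventually (\<lambda>n. a11 n < 0) sequentially"
      using order_tendstoD(2)[OF t11 m11] .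
    moreover have "eventually (\<lambda>n. 0 < a11 n * a22 n - (a12 n)^2) sequentially"
      using order_tendstoD(1)[OF td detM] .
    ultimately have "eventually (\<lambda>n. a11 n < 0 \<and> 0 < a11 n * a22 n - (a12 n)^2) sequentially"
      by (rule eventually_conj)
    then obtain N where "\<forall>n\<ge>N. a11 n < 0 \<and> 0 < a11 n * a22 n - (a12 n)^2"
      unfolding eventually_sequentially by blast
    then obtain n where n1: "a11 n < 0" and n2: "0 < a11 n * a22 n - (a12 n)^2"
      by blast
    have Q: "0 \<le> c1^2 * a11 n + 2 * c1 * c2 * a12 n + c2^2 * a22 n"
      if "c1 * \<phi> n 0 + c2 * \<psi> n 0 = 0" for c1 c2
      unfolding a11_def a12_def a22_def
      by (rule Aform[OF cW Wa Wpos R0 a0 aR sp sq that])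
    show False
    proof (cases "\<phi> n 0 = 0 \<and> \<psi> n 0 = 0")
      case True
      have "0 \<le> 1^2 * a11 n + 2 * 1 * 0 * a12 n + 0^2 * a22 n" by (rule Q) (use True in simp)
      thus False using n1 by simp
    next
      case False
      have "0 \<le> (\<psi> n 0)^2 * a11 n + 2 * (\<psi> n 0) * (- \<phi> n 0) * a12 n + (- \<phi> n 0)^2 * a22 n"
        by (rule Q) (simp add: algebra_simps)
      moreover have "a11 n * (\<psi> n 0)^2 + 2 * a12 n * (\<psi> n 0) * (- \<phi> n 0) + a22 n * (- \<phi> n 0)^2 < 0"
        by (rule negdef[OF n1 n2]) (use False in auto)
      ultimately show False by (simp add: algebra_simps)
    qed
  qed
qed

lemma Pot:
  fixes \<alpha> lam u :: real
  assumes al: "\<alpha> \<ge> 2" and lam: "lam > 0" and uu: "u \<ge> 4 + 20 * lam"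
  shows "at_most_one_neg_eig (\<lambda>v. Vpot u v - lam * u powr (-1 - \<alpha>/2))"
proof -
  define \<mu> where "\<mu> = lam * u powr (-1 - \<alpha>/2)"
  define b where "b = sqrt u"
  define a where "a = 1 / (sqrt 2 * b) + \<mu>"
  define R where "R = sqrt (2 * b)"
  have u4: "4 \<le> u" using uu lam by simp
  have u0: "0 < u" using u4 by simp
  have b2: "2 \<le> b" unfolding b_def using real_sqrt_le_mono[OF u4] by simp
  have bsq: "b^2 = u" unfolding b_def using u0 by simp
  have mu0: "0 \<le> \<mu>" unfolding \<mu>_def using lam by simp
  have "u powr (-1 - \<alpha>/2) \<le> u powr (-2)"
    by (rule powr_mono) (use al u4 in auto)
  also have "u powr (-2) = 1 / u^2"
    using u0 by (simp add: powr_minus powr_numeral divide_inverse)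
  finally have pw: "u powr (-1 - \<alpha>/2) \<le> 1 / u^2" .
  have "\<mu> \<le> lam * (1 / u^2)" unfolding \<mu>_def by (rule mult_left_mono[OF pw]) (use lam in simp)
  also have "lam * (1 / u^2) \<le> (u / 20) * (1 / u^2)"
    by (rule mult_right_mono) (use uu in auto)
  also have "(u / 20) * (1 / u^2) = 1 / (20 * u)" using u0 by (simp add: power2_eq_square field_simps)
  also have "1 / (20 * u) \<le> 1 / (20 * b)"
  proof -
    have "b * 1 \<le> b * b" by (rule mult_left_mono) (use b2 in auto)
    hence "b \<le> u" using bsq by (simp add: power2_eq_square)
    thus ?thesis using b2 by (intro divide_left_mono) auto
  qed
  finally have mub: "\<mu> \<le> 1 / (20 * b)" .
  have s2: "4/3 \<le> sqrt 2"
    by (rule real_le_rsqrt) (simp add: power2_eq_square)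
  have h1: "1 / (sqrt 2 * b) \<le> 1 / ((4/3) * b)"
    by (rule divide_left_mono) (use s2 b2 in \<open>auto intro!: mult_right_mono mult_pos_pos\<close>)
  have h3: "1 / ((4/3) * b) + 1 / (20 * b) = 4 / (5 * b)" using b2 by (simp add: field_simps)
  have ab: "a \<le> 4 / (5 * b)" unfolding a_def using add_mono[OF h1 mub] h3 by simp
  have a0: "0 \<le> a" unfolding a_def using mu0 b2 by simp
  have R0: "0 \<le> R" unfolding R_def using b2 by simp
  have Rsq: "R^2 = 2 * b" unfolding R_def using b2 by (simp add: real_sqrt_pow2)
  have aR: "a * R^2 \<le> 2"
  proof -
    have "a * R^2 \<le> 4 / (5 * b) * (2 * b)" unfolding Rsq
      by (rule mult_right_mono[OF ab]) (use b2 in simp)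
    also have "... = 8/5" using b2 by (simp add: field_simps)
    finally show ?thesis by simp
  qed
  have pbig: "b \<le> (u^2 + v^2) powr (1/4)" for v :: real
  proof -
    have "(u^2) powr (1/4) = (u powr 2) powr (1/4)" using u0 by (simp add: powr_numeral)
    also have "... = u powr (1/2)" by (simp add: powr_powr)
    also have "... = b" unfolding b_def using u0 by (simp add: powr_half_sqrt)
    finally have "b = (u^2) powr (1/4)" by simp
    also have "... \<le> (u^2 + v^2) powr (1/4)" by (rule powr_mono2) auto
    finally show ?thesis .
  qed
  have pq: "1 / (sqrt 2 * (u^2 + v^2) powr (1/4)) \<le> 1 / (sqrt 2 * b)" for v :: real
  proof (rule divide_left_mono)
    have pp: "0 < (u^2 + v^2) powr (1/4)" using pbig[of v] b2 by linarith
    show "sqrt 2 * b \<le> sqrt 2 * (u^2 + v^2) powr (1/4)"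
      by (rule mult_left_mono[OF pbig]) simp
    show "0 < sqrt 2 * (u^2 + v^2) powr (1/4) * (sqrt 2 * b)"
      using pp b2 by (intro mult_pos_pos) auto
  qed simp
  have Wa: "-a \<le> Vpot u v - \<mu>" for v
  proof -
    have p: "0 < (u^2 + v^2) powr (1/4)" using u0 by simp
    have "1 / (sqrt 2 * (u^2 + v^2) powr (1/4)) \<le> 1 / (sqrt 2 * b)" by (rule pq)
    moreover have "0 \<le> v^2 / (2 * sqrt (u^2 + v^2))" by simp
    ultimately show ?thesis unfolding Vpot_def a_def by linarith
  qed
  have Wpos: "0 \<le> Vpot u v - \<mu>" if vR: "R \<le> \<bar>v\<bar>" for v
  proof -
    define t where "t = v^2"
    have t2b: "2 * b \<le> t" unfolding t_def
    proof -
      have "R^2 \<le> \<bar>v\<bar>^2" using vR R0 by (intro power_mono) auto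
      thus "2 * b \<le> v^2" using Rsq by simp
    qed
    have t0: "0 \<le> t" unfolding t_def by simp
    define s where "s = sqrt (u^2 + t)"
    have s0: "0 \<le> s" unfolding s_def using t0 by simp
    have ssq: "s^2 = u^2 + t" unfolding s_def using t0 by simp
    have key: "64 * (b^4 + t) \<le> 25 * b^2 * t^2"
    proof -
      have "(2 * b)^2 \<le> t^2" by (rule power_mono[OF t2b]) (use b2 in simp)
      hence tt: "4 * b^2 \<le> t^2" by (simp add: power_mult_distrib)
      have tt2: "2 * b * t \<le> t^2" using mult_right_mono[OF t2b t0] by (simp add: power2_eq_square)
      have "2^3 \<le> b^3" by (rule power_mono[OF b2]) simp
      hence b3: "8 \<le> b^3" by simp
      have "64 * b^4 \<le> (35/2) * b^2 * t^2"
      proof -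
        have "b^2 * (4 * b^2) \<le> b^2 * t^2" by (rule mult_left_mono[OF tt]) simp
        moreover have "b^2 * (4 * b^2) = 4 * b^4" by (simp add: power2_eq_square power4_eq_xxxx)
        moreover have "0 \<le> b^2 * t^2" by simp
        ultimately show ?thesis by linarith
      qed
      moreover have "64 * t \<le> (15/2) * b^2 * t^2"
      proof -
        have "b^2 * (2 * b * t) \<le> b^2 * t^2" by (rule mult_left_mono[OF tt2]) simp
        moreover have "8 * t \<le> b^3 * t" by (rule mult_right_mono[OF b3 t0])
        moreover have "b^2 * (2 * b * t) = 2 * (b^3 * t)" by (simp add: power2_eq_square power3_eq_cube)
        ultimately show ?thesis using t0 by linarith
      qed
      ultimately show ?thesis by simp
    qed
    have "(2 * a * s)^2 \<le> t^2"
    proof -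
      have "(2 * a * s)^2 = 4 * a^2 * (u^2 + t)" using ssq by (simp add: power_mult_distrib)
      also have "... \<le> 4 * (4 / (5 * b))^2 * (u^2 + t)"
        using power_mono[OF ab a0] t0 by (intro mult_right_mono mult_left_mono) auto
      also have "... = 64 * (b^4 + t) / (25 * b^2)"
        using b2 bsq[symmetric] by (simp add: power2_eq_square power4_eq_xxxx field_simps)
      also have "... \<le> t^2" using key b2 by (simp add: field_simps)
      finally show ?thesis .
    qed
    hence "2 * a * s \<le> t" using t0 by (rule power2_le_imp_le)
    hence h1: "a \<le> t / (2 * s)"
    proof -
      have "0 < u^2 + t" using u0 t0 by (simp add: add_pos_nonneg)
      hence sp: "0 < s" unfolding s_def by simp
      show ?thesis using sp \<open>2 * a * s \<le> t\<close> by (simp add: field_simps)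
    qed
    have "1 / (sqrt 2 * (u^2 + v^2) powr (1/4)) \<le> 1 / (sqrt 2 * b)" by (rule pq)
    thus ?thesis using h1 unfolding Vpot_def a_def s_def t_def by linarith
  qed
  have cW: "continuous_on UNIV (\<lambda>v. Vpot u v - \<mu>)" unfolding Vpot_def
    by (intro continuous_intros) (use u0 in \<open>auto simp: add_pos_nonneg\<close>)
  have "at_most_one_neg_eig (\<lambda>v. Vpot u v - \<mu>)"
    by (rule Abs[OF cW Wa Wpos R0 a0 aR])
  thus ?thesis unfolding \<mu>_def .
qed

theorem mainTheorem5:
  fixes \<alpha> lam :: real
  assumes "\<alpha> \<ge> 2" and "lam > 0"
  shows "\<exists>u0>0. \<forall>u\<ge>u0.
           at_most_one_neg_eig (\<lambda>v. Vpot u v - lam * u powr (-1 - \<alpha>/2))"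
proof (intro exI[of _ "4 + 20 * lam"] conjI allI impI)
  show "0 < 4 + 20 * lam" using assms by simp
  fix u assume "4 + 20 * lam \<le> u"
  thus "at_most_one_neg_eig (\<lambda>v. Vpot u v - lam * u powr (-1 - \<alpha>/2))"
    using Pot assms by blast
qed

end
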